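(* Let $\boldsymbol k$ be an algebraically closed field with $\operatorname{char}\boldsymbol k\neq 2$, let $V$ be a vector space over $\boldsymbol k$ of finite dimension $n$, let $\mathcal C\subseteq V^*\otimes V^*\otimes V$ be the subspace of tensors fixed by the involution $\ell\otimes\ell'\otimes v\mapsto\ell'\otimes\ell\otimes v$, and let $G:=\mathrm{GL}(V)$ act on the projectivization $P\mathcal C$ of $\mathcal C$ via its natural linear action on $\mathcal C$. Then there is a dense open subset of $P\mathcal C$ such that for every point in it, its stabilizer in $G$ coincides with the center of $G$. *)

theory Defs
  imports "HOL-Computational_Algebra.Polynomial"
begin

definition algebraically_closed :: "'k::field itself \<Rightarrow> bool" where
  "algebraically_closed _ \<longleftrightarrow> (\<forall>p::'k poly. degree p > 0 \<longrightarrow> (\<exists>x. poly p x = 0))"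

text \<open>V = 'k^'n with standard basis e_i (indexed by the finite type 'n).
  Linear maps are matrices g :: 'n => 'n => 'k, with g e_j = sum_i g i j e_i.\<close>

type_synonym ('n, 'k) mat = "'n \<Rightarrow> 'n \<Rightarrow> 'k"

definition mat_mul :: "('n::finite, 'k::field) mat \<Rightarrow> ('n, 'k) mat \<Rightarrow> ('n, 'k) mat" where
  "mat_mul g h = (\<lambda>i j. \<Sum>m\<in>UNIV. g i m * h m j)"

definition id_mat :: "('n::finite, 'k::field) mat" where
  "id_mat = (\<lambda>i j. if i = j then 1 else 0)"

definition GL :: "('n::finite, 'k::field) mat set" where
  "GL = {g. \<exists>h. mat_mul g h = id_mat \<and> mat_mul h g = id_mat}"

definition mat_inv :: "('n::finite, 'k::field) mat \<Rightarrow> ('n, 'k) mat" where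
  "mat_inv g = (THE h. mat_mul g h = id_mat \<and> mat_mul h g = id_mat)"

definition center_GL :: "('n::finite, 'k::field) mat set" where
  "center_GL = {g \<in> GL. \<forall>h \<in> GL. mat_mul g h = mat_mul h g}"

text \<open>Tensors in V* (x) V* (x) V, in coordinates:
  t i j l is the coefficient of e_i^* (x) e_j^* (x) e_l.\<close>
type_synonym ('n, 'k) tensor = "'n \<Rightarrow> 'n \<Rightarrow> 'n \<Rightarrow> 'k"

definition symC :: "('n, 'k) tensor set" where
  "symC = {t. \<forall>i j l. t i j l = t j i l}"

text \<open>Natural GL(V)-action on V* (x) V* (x) V:
  g . (l (x) l' (x) v) = (l o g^-1) (x) (l' o g^-1) (x) (g v).\<close>
definition act :: "('n::finite, 'k::field) mat \<Rightarrow> ('n, 'k) tensor \<Rightarrow> ('n, 'k) tensor" where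
  "act g t = (let h = mat_inv g in
     (\<lambda>i j l. \<Sum>a\<in>UNIV. \<Sum>b\<in>UNIV. \<Sum>m\<in>UNIV. h a i * h b j * t a b m * g l m))"

definition proj_stabilizer :: "('n::finite, 'k::field) tensor \<Rightarrow> ('n, 'k) mat set" where
  "proj_stabilizer t = {g \<in> GL. \<exists>c. c \<noteq> 0 \<and> act g t = (\<lambda>i j l. c * t i j l)}"

inductive poly_fun :: "(('n, 'k::comm_ring_1) tensor \<Rightarrow> 'k) \<Rightarrow> bool" where
  const: "poly_fun (\<lambda>_. a)"
| coord: "poly_fun (\<lambda>t. t i j l)"
| add: "poly_fun f \<Longrightarrow> poly_fun g \<Longrightarrow> poly_fun (\<lambda>t. f t + g t)"
| mult: "poly_fun f \<Longrightarrow> poly_fun g \<Longrightarrow> poly_fun (\<lambda>t. f t * g t)"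

text \<open>Zariski topology on PC, described via cones: a subset of PC is identified
  with its preimage in C - {0} (a set of nonzero tensors stable under nonzero scaling).
  PC carries the quotient topology of the Zariski topology on C - {0}, so
  an open set of PC is a scaling-stable subset of C - {0} that is the
  complement (in C - {0}) of the common zero set of a family of polynomial functions.\<close>
definition proj_cone :: "('n, 'k::field) tensor set \<Rightarrow> bool" where
  "proj_cone W \<longleftrightarrow> W \<subseteq> symC - {(\<lambda>i j l. 0)} \<and>
     (\<forall>t\<in>W. \<forall>c. c \<noteq> 0 \<longrightarrow> (\<lambda>i j l. c * t i j l) \<in> W)"

definition proj_open :: "('n, 'k::field) tensor set \<Rightarrow> bool" where
  "proj_open W \<longleftrightarrow> proj_cone W \<and>
     (\<exists>S. (\<forall>f\<in>S. poly_fun f) \<and> W = {t \<in> symC - {(\<lambda>i j l. 0)}. \<exists>f\<in>S. f t \<noteq> 0})"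

definition proj_dense :: "('n, 'k::field) tensor set \<Rightarrow> bool" where
  "proj_dense W \<longleftrightarrow> (\<forall>U. proj_open U \<and> U \<noteq> {} \<longrightarrow> W \<inter> U \<noteq> {})"

end

theory Submission
  imports Defs "HOL-Analysis.Determinants"
begin


definition tv :: "('n::finite,'k::field) mat \<Rightarrow> 'k^'n^'n" where
  "tv g = (\<chi> i j. g i j)"

lemma tv_mul: "tv (mat_mul g h) = tv g ** tv h"
  by (simp add: tv_def mat_mul_def matrix_matrix_mult_def)

lemma tv_id: "tv (id_mat :: ('n::finite,'k::field) mat) = mat 1"
  by (simp add: tv_def id_mat_def mat_def vec_eq_iff)

lemma tv_inj: "tv g = tv h \<Longrightarrow> g = h"
  by (auto simp: tv_def vec_eq_iff intro!: ext)

lemma mat_inv_GL: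
  assumes "(g::('n::finite,'k::field) mat) \<in> GL"
  shows "mat_mul g (mat_inv g) = id_mat \<and> mat_mul (mat_inv g) g = id_mat"
proof -
  from assms obtain h where h: "mat_mul g h = id_mat" "mat_mul h g = id_mat" by (auto simp: GL_def)
  have u: "h' = h" if "mat_mul g h' = id_mat \<and> mat_mul h' g = id_mat" for h'
  proof -
    have "tv h ** (tv g ** tv h') = (tv h ** tv g) ** tv h'" by (simp add: matrix_mul_assoc)
    then have "tv h = tv h'" using that h by (simp add: tv_mul[symmetric] tv_id)
    then show ?thesis by (simp add: tv_inj)
  qed
  have "mat_inv g = h" unfolding mat_inv_def by (rule the_equality) (simp add: h, erule u)
  then show ?thesis using h by simp
qed



lemma contr1:
  fixes g h :: "('n::finite,'k::field) mat"
  assumes hg: "mat_mul h g = id_mat"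
  shows "(\<Sum>a\<in>UNIV. g a i * (\<Sum>a'\<in>UNIV. h a' a * X a')) = X i"
proof -
  have "(\<Sum>a\<in>UNIV. g a i * (\<Sum>a'\<in>UNIV. h a' a * X a')) = (\<Sum>a'\<in>UNIV. (\<Sum>a\<in>UNIV. h a' a * g a i) * X a')"
  proof -
    have "(\<Sum>a\<in>UNIV. g a i * (\<Sum>a'\<in>UNIV. h a' a * X a')) = (\<Sum>a\<in>UNIV. \<Sum>a'\<in>UNIV. g a i * (h a' a * X a'))"
      by (simp add: sum_distrib_left)
    also have "\<dots> = (\<Sum>a'\<in>UNIV. \<Sum>a\<in>UNIV. g a i * (h a' a * X a'))" by (rule sum.swap)
    also have "\<dots> = (\<Sum>a'\<in>UNIV. (\<Sum>a\<in>UNIV. h a' a * g a i) * X a')"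
      by (simp add: sum_distrib_right sum_distrib_left mult_ac)
    finally show ?thesis .
  qed
  also have "\<dots> = (\<Sum>a'\<in>UNIV. id_mat a' i * X a')"
    using hg by (simp add: mat_mul_def fun_eq_iff)
  also have "\<dots> = (\<Sum>a'\<in>UNIV. if a' = i then X a' else 0)"
    by (rule sum.cong) (auto simp: id_mat_def)
  also have "\<dots> = X i" by simp
  finally show ?thesis .
qed

lemma reord: "(\<Sum>q\<in>A. (c q::'k::comm_ring_1) * (\<Sum>a\<in>B. d a * Z a q)) = (\<Sum>a\<in>B. d a * (\<Sum>q\<in>A. c q * Z a q))"
proof -
  have "(\<Sum>q\<in>A. (c q::'k::comm_ring_1) * (\<Sum>a\<in>B. d a * Z a q)) = (\<Sum>q\<in>A. \<Sum>a\<in>B. c q * (d a * Z a q))"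
    by (simp add: sum_distrib_left)
  also have "\<dots> = (\<Sum>a\<in>B. \<Sum>q\<in>A. c q * (d a * Z a q))" by (rule sum.swap)
  also have "\<dots> = (\<Sum>a\<in>B. d a * (\<Sum>q\<in>A. c q * Z a q))"
    by (simp add: sum_distrib_left mult_ac)
  finally show ?thesis .
qed

lemma act_alt: "act g t i j l = (let h = mat_inv g in
   (\<Sum>a\<in>UNIV. h a i * (\<Sum>b\<in>UNIV. h b j * (\<Sum>m\<in>UNIV. t a b m * g l m))))"
  by (simp add: act_def Let_def sum_distrib_left mult_ac)

lemma KI:
  fixes g :: "('n::finite,'k::field) mat"
  assumes hg: "mat_mul (mat_inv g) g = id_mat"
  shows "(\<Sum>a\<in>UNIV. g a i * (\<Sum>q\<in>UNIV. g q j * act g t a q l)) = (\<Sum>m\<in>UNIV. t i j m * g l m)"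
proof -
  let ?h = "mat_inv g"
  define Y where "Y a' b' = (\<Sum>m\<in>UNIV. t a' b' m * g l m)" for a' b'
  have "(\<Sum>a\<in>UNIV. g a i * (\<Sum>q\<in>UNIV. g q j * act g t a q l))
     = (\<Sum>a\<in>UNIV. g a i * (\<Sum>q\<in>UNIV. g q j * (\<Sum>a'\<in>UNIV. ?h a' a * (\<Sum>b'\<in>UNIV. ?h b' q * Y a' b'))))"
    by (simp add: act_alt Y_def Let_def)
  also have "\<dots> = (\<Sum>a\<in>UNIV. g a i * (\<Sum>a'\<in>UNIV. ?h a' a * (\<Sum>q\<in>UNIV. g q j * (\<Sum>b'\<in>UNIV. ?h b' q * Y a' b'))))"
    apply (rule sum.cong[OF refl])
    apply (rule arg_cong[where f="(*) (g _ i)"])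
    apply (rule reord)
    done
  also have "\<dots> = (\<Sum>a\<in>UNIV. g a i * (\<Sum>a'\<in>UNIV. ?h a' a * Y a' j))"
    by (simp add: contr1[OF hg])
  also have "\<dots> = Y i j" by (rule contr1[OF hg])
  finally show ?thesis by (simp add: Y_def)
qed



lemma swap3: "(\<Sum>a\<in>A. \<Sum>b\<in>B. \<Sum>c\<in>C. F a b c) = (\<Sum>c\<in>C. \<Sum>b\<in>B. \<Sum>a\<in>A. (F a b c :: 'k::comm_monoid_add))"
proof -
  have "(\<Sum>a\<in>A. \<Sum>b\<in>B. \<Sum>c\<in>C. F a b c) = (\<Sum>a\<in>A. \<Sum>c\<in>C. \<Sum>b\<in>B. F a b c)"
    by (rule sum.cong[OF refl], rule sum.swap)
  also have "\<dots> = (\<Sum>c\<in>C. \<Sum>a\<in>A. \<Sum>b\<in>B. F a b c)" by (rule sum.swap)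
  also have "\<dots> = (\<Sum>c\<in>C. \<Sum>b\<in>B. \<Sum>a\<in>A. F a b c)"
    by (rule sum.cong[OF refl], rule sum.swap)
  finally show ?thesis .
qed

lemma sum_if1: "(\<Sum>j\<in>(UNIV::'n::finite set). (if j = i then 1 else 0) * (f j::'a::semiring_1)) = f i"
proof -
  have "(\<Sum>j\<in>UNIV. (if j = i then 1 else 0) * f j) = (\<Sum>j\<in>UNIV. if j = i then f j else 0)"
    by (rule sum.cong) auto
  also have "\<dots> = f i" by simp
  finally show ?thesis .
qed

lemma sum_if2: "(\<Sum>j\<in>(UNIV::'n::finite set). (f j::'a::semiring_1) * (if j = i then 1 else 0)) = f i"
proof -
  have "(\<Sum>j\<in>UNIV. f j * (if j = i then 1 else 0)) = (\<Sum>j\<in>UNIV. if j = i then f j else 0)"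
    by (rule sum.cong) auto
  also have "\<dots> = f i" by simp
  finally show ?thesis .
qed

definition Lm :: "('n::finite,'k::field) tensor \<Rightarrow> 'k^'n \<Rightarrow> 'k^'n^'n" where
  "Lm t x = (\<chi> l j. \<Sum>i\<in>UNIV. x$i * t i j l)"
definition tau :: "('n::finite,'k::field) tensor \<Rightarrow> 'k^'n" where
  "tau t = (\<chi> i. \<Sum>a\<in>UNIV. t i a a)"
definition tf :: "('n::finite,'k::field) tensor \<Rightarrow> 'k^'n \<Rightarrow> 'k" where
  "tf t x = (\<Sum>i\<in>UNIV. tau t $ i * x $ i)"
definition Bm :: "('n::finite,'k::field) tensor \<Rightarrow> 'k^'n^'n" where
  "Bm t = (\<chi> i j. \<Sum>l\<in>UNIV. tau t $ l * t i j l)"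
definition bb :: "('n::finite,'k::field) tensor \<Rightarrow> 'k^'n \<Rightarrow> 'k^'n \<Rightarrow> 'k" where
  "bb t x y = tf t (Lm t x *v y)"
definition v1 :: "('n::finite,'k::field) tensor \<Rightarrow> 'k^'n" where
  "v1 t = (\<chi> k. det (\<chi> i j. if j = k then tau t $ i else Bm t $ i $ j))"
primrec chain :: "('n::finite,'k::field) tensor \<Rightarrow> nat \<Rightarrow> 'k^'n" where
  "chain t 0 = v1 t"
| "chain t (Suc s) = Lm t (v1 t) *v chain t s"
definition Cm :: "('n::finite \<Rightarrow> nat) \<Rightarrow> ('n,'k::field) tensor \<Rightarrow> 'k^'n^'n" where
  "Cm pos t = (\<chi> l j. chain t (pos j) $ l)"
definition fF :: "('n::finite \<Rightarrow> nat) \<Rightarrow> ('n,'k::field) tensor \<Rightarrow> 'k" where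
  "fF pos t = det (Bm t) * det (Cm pos t)"

lemma tf_trace: "tf t x = trace (Lm t x)"
proof -
  have "trace (Lm t x) = (\<Sum>l\<in>UNIV. \<Sum>i\<in>UNIV. x$i * t i l l)"
    by (simp add: trace_def Lm_def)
  also have "\<dots> = (\<Sum>i\<in>UNIV. \<Sum>l\<in>UNIV. x$i * t i l l)" by (rule sum.swap)
  also have "\<dots> = tf t x" by (simp add: tf_def tau_def sum_distrib_left sum_distrib_right mult_ac)
  finally show ?thesis by simp
qed

lemma bb_lin1: "bb t x y = (\<Sum>i\<in>UNIV. x$i * (Bm t *v y)$i)"
proof -
  have "bb t x y = (\<Sum>l\<in>UNIV. \<Sum>j\<in>UNIV. \<Sum>i\<in>UNIV. tau t $ l * (x$i * t i j l * y$j))"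
    by (simp add: bb_def tf_def Lm_def matrix_vector_mult_def sum_distrib_left sum_distrib_right mult_ac)
  also have "\<dots> = (\<Sum>i\<in>UNIV. \<Sum>j\<in>UNIV. \<Sum>l\<in>UNIV. tau t $ l * (x$i * t i j l * y$j))"
    by (rule swap3)
  also have "\<dots> = (\<Sum>i\<in>UNIV. x$i * (Bm t *v y)$i)"
    by (simp add: Bm_def matrix_vector_mult_def sum_distrib_left sum_distrib_right mult_ac)
  finally show ?thesis .
qed

lemma Bm_bb: "(Bm t *v y) $ i = bb t (axis i 1) y"
  by (simp add: bb_lin1 axis_def sum_if1)

lemma tf_axis: "tf t (axis i 1) = tau t $ i"
  by (simp add: tf_def axis_def sum_if2)


lemma mvs: "(A::'k::comm_ring_1^'n::finite^'m::finite) *v (c *s x) = c *s (A *v x)"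
  by (simp add: vec_eq_iff matrix_vector_mult_def sum_distrib_left mult_ac)

locale autK =
  fixes t :: "('n::finite,'k::field) tensor" and K H :: "'k^'n^'n"
  assumes aut: "\<And>x. K ** Lm t x = Lm t (K *v x) ** K"
    and KH: "K ** H = mat 1" and HK: "H ** K = mat 1"
begin

lemma tf_inv: "tf t (K *v x) = tf t x"
proof -
  have "trace (Lm t (K *v x)) = trace (Lm t (K *v x) ** (K ** H))" by (simp add: KH)
  also have "\<dots> = trace ((K ** Lm t x) ** H)" by (simp add: aut matrix_mul_assoc)
  also have "\<dots> = trace (H ** (K ** Lm t x))" by (rule trace_mul_sym)
  also have "\<dots> = trace (Lm t x)" by (simp add: matrix_mul_assoc HK)
  finally show ?thesis by (simp add: tf_trace)
qed

lemma bb_inv: "bb t (K *v x) (K *v y) = bb t x y"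
proof -
  have "Lm t (K *v x) *v (K *v y) = K *v (Lm t x *v y)"
    by (simp add: matrix_vector_mul_assoc aut)
  then show ?thesis by (simp add: bb_def tf_inv)
qed

lemma fixu:
  assumes u: "Bm t *v u = tau t" and d: "det (Bm t) \<noteq> 0"
  shows "K *v u = u"
proof -
  have "Bm t *v (K *v u) = tau t"
  proof (subst vec_eq_iff, intro allI)
    fix i
    have ax: "axis i 1 = K *v (H *v axis i 1)"
      by (simp add: matrix_vector_mul_assoc KH)
    have "(Bm t *v (K *v u)) $ i = bb t (K *v (H *v axis i 1)) (K *v u)"
      by (simp add: Bm_bb ax[symmetric])
    also have "\<dots> = bb t (H *v axis i 1) u" by (rule bb_inv)
    also have "\<dots> = tf t (H *v axis i 1)" by (simp add: bb_lin1 u tf_def mult.commute)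
    also have "\<dots> = tf t (K *v (H *v axis i 1))" by (rule tf_inv[symmetric])
    also have "\<dots> = tf t (axis i 1)" by (simp only: ax[symmetric])
    finally show "(Bm t *v (K *v u)) $ i = tau t $ i" by (simp add: tf_axis)
  qed
  moreover obtain B where B: "B ** Bm t = mat 1"
    using d unfolding invertible_det_nz[symmetric] invertible_def by blast
  ultimately have "B *v (Bm t *v (K *v u)) = B *v (Bm t *v u)" using u by simp
  then show ?thesis by (simp add: matrix_vector_mul_assoc matrix_mul_assoc B)
qed

lemma v1_eq:
  assumes u: "Bm t *v u = tau t"
  shows "v1 t = det (Bm t) *s u"
proof -
  have "det (\<chi> i j. if j = k then tau t $ i else Bm t $ i $ j) = u$k * det (Bm t)" for k
    using cramer_lemma[where A="Bm t" and x=u and k=k] unfolding u .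
  then show ?thesis unfolding v1_def vec_eq_iff by (simp add: mult.commute)
qed

lemma fix_chain:
  assumes d: "det (Bm t) \<noteq> 0"
  shows "K *v chain t s = chain t s"
proof -
  obtain B where B: "Bm t ** B = mat 1"
    using d unfolding invertible_det_nz[symmetric] invertible_def by blast
  define u where "u = B *v tau t"
  have u: "Bm t *v u = tau t" by (simp add: u_def matrix_vector_mul_assoc B)
  have kv: "K *v v1 t = v1 t" using fixu[OF u d] by (simp add: v1_eq[OF u] mvs)
  show ?thesis
  proof (induction s)
    case 0 then show ?case by (simp add: kv)
  next
    case (Suc s)
    have "K *v (Lm t (v1 t) *v chain t s) = (K ** Lm t (v1 t)) *v chain t s"
      by (simp add: matrix_vector_mul_assoc)
    also have "\<dots> = Lm t (v1 t) *v (K *v chain t s)"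
      by (simp add: aut kv matrix_vector_mul_assoc)
    finally show ?case using Suc by simp
  qed
qed

lemma K_id:
  assumes "fF pos t \<noteq> 0"
  shows "K = mat 1"
proof -
  from assms have d: "det (Bm t) \<noteq> 0" and dc: "det (Cm pos t) \<noteq> 0" by (auto simp: fF_def)
  have KC: "K ** Cm pos t = Cm pos t"
  proof -
    have "(K ** Cm pos t) $ l $ j = (K *v chain t (pos j)) $ l" for l j
      by (simp add: Cm_def matrix_matrix_mult_def matrix_vector_mult_def)
    then show ?thesis by (simp add: vec_eq_iff fix_chain[OF d] Cm_def)
  qed
  obtain C where C: "Cm pos t ** C = mat 1"
    using dc unfolding invertible_det_nz[symmetric] invertible_def by blast
  have "K = K ** (Cm pos t ** C)" by (simp add: C)
  also have "\<dots> = (K ** Cm pos t) ** C" by (rule matrix_mul_assoc)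
  also have "\<dots> = mat 1" by (simp only: KC C)
  finally show ?thesis .
qed

end



definition scal :: "'k \<Rightarrow> ('n::finite,'k::field) mat" where
  "scal c = (\<lambda>i j. if i = j then c else 0)"

lemma mm_scal: "mat_mul (scal a) (scal b) = (scal (a * b) :: ('n::finite,'k::field) mat)"
proof -
  have "(\<Sum>m\<in>UNIV. (if i = m then a else 0) * (if m = j then b else 0)) = (if i = j then a * b else 0)"
    for i j :: 'n
  proof -
    have "(\<Sum>m\<in>UNIV. (if i = m then a else 0) * (if m = j then b else 0))
       = (\<Sum>m\<in>UNIV. if m = i then (if i = j then a * b else 0) else 0)"
      by (rule sum.cong) auto
    also have "\<dots> = (if i = j then a * b else 0)" by simp
    finally show ?thesis .
  qed
  then show ?thesis by (simp add: mat_mul_def scal_def fun_eq_iff)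
qed

lemma scal_GL: "c \<noteq> 0 \<Longrightarrow> (scal c :: ('n::finite,'k::field) mat) \<in> GL"
  unfolding GL_def
  by (rule CollectI, rule exI[of _ "scal (inverse c)"]) (simp add: mm_scal, simp add: scal_def id_mat_def)

lemma mat_inv_eq:
  assumes h: "mat_mul g h = id_mat" "mat_mul h g = (id_mat :: ('n::finite,'k::field) mat)"
  shows "mat_inv g = h"
proof -
  have u: "h' = h" if "mat_mul g h' = id_mat \<and> mat_mul h' g = id_mat" for h'
  proof -
    have "tv h ** (tv g ** tv h') = (tv h ** tv g) ** tv h'" by (simp add: matrix_mul_assoc)
    then have "tv h = tv h'" using that h by (simp add: tv_mul[symmetric] tv_id)
    then show ?thesis by (simp add: tv_inj)
  qed
  show "mat_inv g = h" unfolding mat_inv_def by (rule the_equality) (simp add: h, erule u)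
qed

lemma mat_inv_scal: "c \<noteq> 0 \<Longrightarrow> mat_inv (scal c :: ('n::finite,'k::field) mat) = scal (inverse c)"
  by (rule mat_inv_eq) (simp_all add: mm_scal, simp_all add: scal_def id_mat_def)

lemma act_scal:
  assumes c: "c \<noteq> 0"
  shows "act (scal c :: ('n::finite,'k::field) mat) t = (\<lambda>i j l. inverse c * t i j l)"
proof (intro ext)
  fix i j l :: 'n
  have e1: "(\<Sum>m\<in>UNIV. t a b m * scal c l m) = c * t a b l" for a b
  proof -
    have "(\<Sum>m\<in>UNIV. t a b m * scal c l m) = (\<Sum>m\<in>UNIV. if m = l then c * t a b m else 0)"
      by (rule sum.cong) (auto simp: scal_def)
    then show ?thesis by simp
  qed
  have e2: "(\<Sum>b\<in>UNIV. scal (inverse c) b j * (c * t a b l)) = t a j l" for a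
  proof -
    have "(\<Sum>b\<in>UNIV. scal (inverse c) b j * (c * t a b l)) = (\<Sum>b\<in>UNIV. if b = j then t a b l else 0)"
      by (rule sum.cong) (auto simp: scal_def c)
    then show ?thesis by simp
  qed
  have e3: "(\<Sum>a\<in>UNIV. scal (inverse c) a i * t a j l) = inverse c * t i j l"
  proof -
    have "(\<Sum>a\<in>UNIV. scal (inverse c) a i * t a j l) = (\<Sum>a\<in>UNIV. if a = i then inverse c * t a j l else 0)"
      by (rule sum.cong) (auto simp: scal_def)
    then show ?thesis by simp
  qed
  show "act (scal c) t i j l = inverse c * t i j l"
    by (simp add: act_alt Let_def mat_inv_scal[OF c] e1 e2 e3)
qed

definition Eij :: "'n \<Rightarrow> 'n \<Rightarrow> 'k \<Rightarrow> ('n::finite,'k::field) mat" where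
  "Eij i j x = (\<lambda>a b. (if a = b then 1 else 0) + (if a = i \<and> b = j then x else 0))"

lemma mul_E: "mat_mul g (Eij i j x) a b = g a b + (if b = j then x * g a i else 0)"
proof -
  have "mat_mul g (Eij i j x) a b = (\<Sum>m\<in>UNIV. (if m = b then g a m else 0) + (if m = i then (if b = j then x * g a m else 0) else 0))"
    unfolding mat_mul_def Eij_def by (rule sum.cong) (auto simp: algebra_simps)
  also have "\<dots> = g a b + (if b = j then x * g a i else 0)"
    by (simp add: sum.distrib)
  finally show ?thesis .
qed

lemma E_mul: "mat_mul (Eij i j x) g a b = g a b + (if a = i then x * g j b else 0)"
proof -
  have "mat_mul (Eij i j x) g a b = (\<Sum>m\<in>UNIV. (if m = a then g m b else 0) + (if m = j then (if a = i then x * g m b else 0) else 0))"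
    unfolding mat_mul_def Eij_def by (rule sum.cong) (auto simp: algebra_simps)
  also have "\<dots> = g a b + (if a = i then x * g j b else 0)"
    by (simp add: sum.distrib)
  finally show ?thesis .
qed

lemma E_GL: "i \<noteq> j \<Longrightarrow> Eij i j x \<in> GL"
  unfolding GL_def
  apply (rule CollectI, rule exI[of _ "Eij i j (-x)"])
  apply (simp add: fun_eq_iff mul_E E_mul)
  apply (auto simp: Eij_def id_mat_def)
  done

lemma center_scal:
  assumes g: "(g::('n::finite,'k::field) mat) \<in> center_GL"
  shows "\<exists>c. c \<noteq> 0 \<and> g = scal c"
proof -
  from g have gGL: "g \<in> GL" and comm: "\<And>h. h \<in> GL \<Longrightarrow> mat_mul g h = mat_mul h g"
    by (auto simp: center_GL_def)
  have key: "(if b = j then g a i else 0) = (if a = i then g j b else 0)" if "i \<noteq> j" for i j a b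
  proof -
    have c: "mat_mul g (Eij i j 1) a b = mat_mul (Eij i j 1) g a b"
      using comm[OF E_GL[OF that]] by simp
    show ?thesis using c unfolding mul_E E_mul by (auto split: if_splits)
  qed
  have off: "g a i = 0" if "a \<noteq> i" for a i
    using key[where i=i and j=a and a=a and b=a] that by simp
  have diag: "g i i = g j j" for i j
    using key[where i=i and j=j and a=i and b=j] by (cases "i = j") auto
  fix i0 :: 'n
  have geq: "g = scal (g i0 i0)"
  proof (intro ext)
    fix a b
    show "g a b = scal (g i0 i0) a b"
  proof (cases "a = b")
    case True then show ?thesis using diag[of b i0] by (simp add: scal_def)
  next
    case False then show ?thesis using off[of a b] by (simp add: scal_def)
  qed
  qed
  moreover have "g i0 i0 \<noteq> 0"
  proof
    assume "g i0 i0 = 0"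
    with geq have "g = scal 0" by (simp only:)
    moreover obtain h where "mat_mul g h = id_mat" using gGL by (auto simp: GL_def)
    ultimately have "mat_mul (scal 0) h i0 i0 = id_mat i0 i0" by simp
    then show False by (simp add: mat_mul_def scal_def id_mat_def)
  qed
  ultimately show ?thesis by blast
qed

lemma scal_center: "c \<noteq> 0 \<Longrightarrow> (scal c :: ('n::finite,'k::field) mat) \<in> center_GL"
  unfolding center_GL_def
proof (intro CollectI conjI ballI)
  assume c: "c \<noteq> 0"
  show "scal c \<in> GL" using scal_GL[OF c] .
  fix h :: "('n,'k) mat"
  have e: "(\<Sum>m\<in>UNIV. scal c a m * h m b) = c * h a b" "(\<Sum>m\<in>UNIV. h a m * scal c m b) = c * h a b" for a b
  proof -
    have "(\<Sum>m\<in>UNIV. scal c a m * h m b) = (\<Sum>m\<in>UNIV. if m = a then c * h m b else 0)"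
      by (rule sum.cong) (auto simp: scal_def)
    then show "(\<Sum>m\<in>UNIV. scal c a m * h m b) = c * h a b" by simp
    have "(\<Sum>m\<in>UNIV. h a m * scal c m b) = (\<Sum>m\<in>UNIV. if m = b then c * h a m else 0)"
      by (rule sum.cong) (auto simp: scal_def)
    then show "(\<Sum>m\<in>UNIV. h a m * scal c m b) = c * h a b" by simp
  qed
  show "mat_mul (scal c) h = mat_mul h (scal c)"
    by (simp add: mat_mul_def fun_eq_iff e)
qed



lemma aut_from_act:
  fixes g :: "('n::finite,'k::field) mat"
  assumes hg: "mat_mul (mat_inv g) g = id_mat"
    and act: "act g t = (\<lambda>i j l. c * t i j l)"
  defines "K \<equiv> (\<chi> i j. c * g i j)"
  shows "K ** Lm t x = Lm t (K *v x) ** K"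
proof -
  have KIc: "(\<Sum>a\<in>UNIV. g a i * (\<Sum>q\<in>UNIV. g q j * (c * t a q l))) = (\<Sum>m\<in>UNIV. t i j m * g l m)" for i j l
    using KI[OF hg, of i j t l] by (simp add: act)
  show ?thesis
  proof (subst vec_eq_iff, intro allI, subst vec_eq_iff, intro allI)
    fix l j
    have "(Lm t (K *v x) ** K) $ l $ j = (\<Sum>q\<in>UNIV. \<Sum>a\<in>UNIV. \<Sum>i\<in>UNIV. x$i * c * (g a i * (g q j * (c * t a q l))))"
      by (simp add: K_def Lm_def matrix_matrix_mult_def matrix_vector_mult_def sum_distrib_left sum_distrib_right mult_ac)
    also have "\<dots> = (\<Sum>i\<in>UNIV. \<Sum>a\<in>UNIV. \<Sum>q\<in>UNIV. x$i * c * (g a i * (g q j * (c * t a q l))))"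
      by (rule swap3)
    also have "\<dots> = (\<Sum>i\<in>UNIV. x$i * c * (\<Sum>a\<in>UNIV. g a i * (\<Sum>q\<in>UNIV. g q j * (c * t a q l))))"
      by (simp add: sum_distrib_left)
    also have "\<dots> = (\<Sum>i\<in>UNIV. x$i * c * (\<Sum>m\<in>UNIV. t i j m * g l m))"
      by (simp add: KIc)
    also have "\<dots> = (\<Sum>i\<in>UNIV. \<Sum>m\<in>UNIV. c * g l m * (x$i * t i j m))"
      by (simp add: sum_distrib_left mult_ac)
    also have "\<dots> = (\<Sum>m\<in>UNIV. \<Sum>i\<in>UNIV. c * g l m * (x$i * t i j m))"
      by (rule sum.swap)
    also have "\<dots> = (K ** Lm t x) $ l $ j"
      by (simp add: K_def Lm_def matrix_matrix_mult_def sum_distrib_left)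
    finally show "(K ** Lm t x) $ l $ j = (Lm t (K *v x) ** K) $ l $ j" by simp
  qed
qed

lemma stab_center:
  assumes f: "fF pos t \<noteq> 0"
  shows "proj_stabilizer t = (center_GL :: ('n::finite,'k::field) mat set)"
proof
  show "center_GL \<subseteq> proj_stabilizer t"
  proof
    fix g :: "('n,'k) mat" assume "g \<in> center_GL"
    then obtain c where c: "c \<noteq> 0" and g: "g = scal c" using center_scal by blast
    show "g \<in> proj_stabilizer t"
      unfolding proj_stabilizer_def using c g scal_GL[OF c] act_scal[OF c, of t] by (auto intro!: exI[of _ "inverse c"])
  qed
next
  show "proj_stabilizer t \<subseteq> center_GL"
  proof
    fix g :: "('n,'k) mat" assume "g \<in> proj_stabilizer t"
    then obtain c where gGL: "g \<in> GL" and c: "c \<noteq> 0" and act: "act g t = (\<lambda>i j l. c * t i j l)"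
      by (auto simp: proj_stabilizer_def)
    note inv = mat_inv_GL[OF gGL]
    define K where "K = (\<chi> i j. c * g i j)"
    define H where "H = (\<chi> i j. inverse c * mat_inv g i j)"
    have cc: "\<And>x y. c * x * (inverse c * y) = x * y" "\<And>x y. inverse c * x * (c * y) = x * y"
      using c by (simp_all add: field_simps)
    have KH: "K ** H = mat 1"
    proof -
      have "K ** H = tv (mat_mul g (mat_inv g))"
        by (simp add: K_def H_def tv_def mat_mul_def matrix_matrix_mult_def vec_eq_iff cc)
      then show ?thesis using inv by (simp add: tv_id)
    qed
    have HK: "H ** K = mat 1"
    proof -
      have "H ** K = tv (mat_mul (mat_inv g) g)"
        by (simp add: K_def H_def tv_def mat_mul_def matrix_matrix_mult_def vec_eq_iff cc)
      then show ?thesis using inv by (simp add: tv_id)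
    qed
    have aut: "\<And>x. K ** Lm t x = Lm t (K *v x) ** K"
      unfolding K_def by (rule aut_from_act[OF conjunct2[OF inv] act])
    interpret autK t K H using aut KH HK by unfold_locales
    have "K = mat 1" using K_id[OF f] .
    then have ce: "c * g i j = (if i = j then 1 else 0)" for i j
      unfolding K_def by (auto simp: vec_eq_iff mat_def)
    have "g i j = scal (inverse c) i j" for i j
    proof -
      have "g i j = inverse c * (c * g i j)" using c by simp
      also have "\<dots> = inverse c * (if i = j then 1 else 0)" by (simp only: ce)
      finally show ?thesis by (simp add: scal_def)
    qed
    then have "g = scal (inverse c)" by (intro ext)
    then show "g \<in> center_GL" using scal_center[of "inverse c"] c by simp
  qed
qed



lemma poly_fun_sum:
  "finite A \<Longrightarrow> (\<And>a. a \<in> A \<Longrightarrow> poly_fun (F a)) \<Longrightarrow> poly_fun (\<lambda>t. \<Sum>a\<in>A. F a t)"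
proof (induction A rule: finite_induct)
  case empty then show ?case using poly_fun.const[of 0] by simp
next
  case (insert x A) then show ?case by (simp add: poly_fun.add)
qed

lemma poly_fun_prod:
  "finite A \<Longrightarrow> (\<And>a. a \<in> A \<Longrightarrow> poly_fun (F a)) \<Longrightarrow> poly_fun (\<lambda>t. \<Prod>a\<in>A. F a t)"
proof (induction A rule: finite_induct)
  case empty then show ?case using poly_fun.const[of 1] by simp
next
  case (insert x A) then show ?case by (simp add: poly_fun.mult)
qed

lemma poly_fun_det:
  fixes M :: "('n::finite,'k::field) tensor \<Rightarrow> 'k^'m::finite^'m"
  assumes "\<And>i j. poly_fun (\<lambda>t. M t $ i $ j)"
  shows "poly_fun (\<lambda>t. det (M t))"
  unfolding det_def
  by (rule poly_fun_sum) (auto intro!: poly_fun.mult poly_fun.const poly_fun_prod assms)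

lemma poly_fun_scale:
  "poly_fun f \<Longrightarrow> poly_fun (\<lambda>t. f (\<lambda>i j l. (c::'k::comm_ring_1) * t i j l))"
proof (induction rule: poly_fun.induct)
  case (const a) then show ?case by (rule poly_fun.const)
next
  case (coord i j l) then show ?case by (auto intro!: poly_fun.mult poly_fun.const poly_fun.coord)
next
  case (add f g) then show ?case by (intro poly_fun.add)
next
  case (mult f g) then show ?case by (intro poly_fun.mult)
qed

lemma poly_fun_if: "poly_fun f \<Longrightarrow> poly_fun g \<Longrightarrow> poly_fun (\<lambda>t. if P then f t else g t)"
  by (cases P) simp_all

lemma poly_fun_line:
  "poly_fun f \<Longrightarrow> \<exists>p. \<forall>s. f (\<lambda>i j l. A i j l + s * B i j l) = poly p (s::'k::comm_ring_1)"
proof (induction rule: poly_fun.induct)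
  case (const a) then show ?case by (intro exI[of _ "[:a:]"]) simp
next
  case (coord i j l) then show ?case by (intro exI[of _ "[:A i j l, B i j l:]"]) (simp add: mult.commute)
next
  case (add f g)
  then obtain p q where "\<forall>s. f (\<lambda>i j l. A i j l + s * B i j l) = poly p s"
    "\<forall>s. g (\<lambda>i j l. A i j l + s * B i j l) = poly q s" by blast
  then show ?case by (intro exI[of _ "p + q"]) simp
next
  case (mult f g)
  then obtain p q where "\<forall>s. f (\<lambda>i j l. A i j l + s * B i j l) = poly p s"
    "\<forall>s. g (\<lambda>i j l. A i j l + s * B i j l) = poly q s" by blast
  then show ?case by (intro exI[of _ "p * q"]) simp
qed

lemma poly_fun_fF: "poly_fun (fF pos :: ('n::finite,'k::field) tensor \<Rightarrow> 'k)"
proof -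
  have tau: "poly_fun (\<lambda>t::('n,'k) tensor. tau t $ i)" for i :: 'n
    unfolding tau_def by (simp add: poly_fun_sum poly_fun.coord)
  have bm: "poly_fun (\<lambda>t::('n,'k) tensor. Bm t $ i $ j)" for i j :: 'n
    unfolding Bm_def by (simp add: poly_fun_sum poly_fun.coord poly_fun.mult tau)
  have v: "poly_fun (\<lambda>t::('n,'k) tensor. v1 t $ k)" for k :: 'n
  proof -
    have "(\<lambda>t::('n,'k) tensor. v1 t $ k) = (\<lambda>t::('n,'k) tensor. det (\<chi> i j. if j = k then tau t $ i else Bm t $ i $ j))"
      by (simp add: v1_def fun_eq_iff)
    moreover have "poly_fun (\<lambda>t::('n,'k) tensor. det (\<chi> i j. if j = k then tau t $ i else Bm t $ i $ j))"
      by (rule poly_fun_det) (simp add: tau bm poly_fun_if)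
    ultimately show ?thesis by simp
  qed
  have ch: "poly_fun (\<lambda>t::('n,'k) tensor. chain t s $ k)" for s k
  proof (induction s arbitrary: k)
    case 0 then show ?case by (simp add: v)
  next
    case (Suc s) then show ?case
      by (simp add: Lm_def matrix_vector_mult_def poly_fun_sum poly_fun.coord poly_fun.mult v)
  qed
  show ?thesis unfolding fF_def
    by (rule poly_fun.mult; rule poly_fun_det) (simp_all add: bm Cm_def ch)
qed

lemma alg_closed_infinite:
  assumes "algebraically_closed TYPE('k::field)"
  shows "infinite (UNIV :: 'k set)"
proof
  assume fin: "finite (UNIV :: 'k set)"
  define q :: "'k poly" where "q = (\<Prod>a\<in>UNIV. [:-a, 1:])"
  have dq: "degree q = card (UNIV :: 'k set)"
    unfolding q_def by (subst degree_prod_eq_sum_degree) auto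
  have "card (UNIV :: 'k set) > 0" using fin by (simp add: card_gt_0_iff)
  then have "degree ([:1:] + q) = degree q" by (intro degree_add_eq_right) (simp add: dq)
  then have "degree ([:1:] + q) > 0" using \<open>card (UNIV :: 'k set) > 0\<close> dq by simp
  then obtain x where x: "poly ([:1:] + q) x = 0"
    using assms unfolding algebraically_closed_def by blast
  have "poly q x = 0" unfolding q_def poly_prod using fin
    by (auto simp: prod_zero_iff)
  with x show False by simp
qed



lemma v1_eq':
  assumes u: "Bm t *v u = tau t"
  shows "v1 t = det (Bm t) *s u"
proof -
  have "det (\<chi> i j. if j = k then tau t $ i else Bm t $ i $ j) = u$k * det (Bm t)" for k
    using cramer_lemma[where A="Bm t" and x=u and k=k] unfolding u .
  then show ?thesis unfolding v1_def vec_eq_iff by (simp add: mult.commute)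
qed

lemma sum_ifm: "(\<Sum>i\<in>(UNIV::'n::finite set). (if i = p then a else 0) * (f i::'a::semiring_1)) = a * f p"
proof -
  have "(\<Sum>i\<in>(UNIV::'n set). (if i = p then a else 0) * f i) = (\<Sum>i\<in>UNIV. if i = p then a * f i else 0)"
    by (rule sum.cong) auto
  also have "\<dots> = a * f p" by simp
  finally show ?thesis .
qed

lemma sum_ifm2: "(\<Sum>i\<in>(UNIV::'n::finite set). (f i::'a::semiring_1) * (if i = p then a else 0)) = f p * a"
proof -
  have "(\<Sum>i\<in>(UNIV::'n set). f i * (if i = p then a else 0)) = (\<Sum>i\<in>UNIV. if i = p then f i * a else 0)"
    by (rule sum.cong) auto
  also have "\<dots> = f p * a" by simp
  finally show ?thesis .
qed

lemma Lm_axis: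
  fixes t :: "('n::finite,'k::field) tensor"
  shows "(Lm t (a *s axis p 1) *v (b *s axis q 1)) $ l = a * b * t p q l"
proof -
  have i1: "(\<Sum>i\<in>UNIV. a * axis p 1 $ i * t i j l) = a * t p j l" for j
  proof -
    have "(\<Sum>i\<in>UNIV. a * axis p 1 $ i * t i j l) = (\<Sum>i\<in>UNIV. if i = p then a * t i j l else 0)"
      by (rule sum.cong) (auto simp: axis_def)
    then show ?thesis by simp
  qed
  have i2: "(\<Sum>j\<in>UNIV. F j * (b * axis q 1 $ j)) = F q * b" for F :: "'n \<Rightarrow> 'k"
  proof -
    have "(\<Sum>j\<in>UNIV. F j * (b * axis q 1 $ j)) = (\<Sum>j\<in>UNIV. if j = q then F j * b else 0)"
      by (rule sum.cong) (auto simp: axis_def)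
    then show ?thesis by simp
  qed
  show ?thesis
    by (simp add: Lm_def matrix_vector_mult_def i1 i2)
qed

locale wit =
  fixes pos :: "'n::finite \<Rightarrow> nat"
  assumes bij: "bij_betw pos UNIV {..<CARD('n)}"
begin

definition enum :: "nat \<Rightarrow> 'n" where "enum k = inv_into UNIV pos k"
abbreviation "z0 \<equiv> enum 0"

lemma pos_lt: "pos x < CARD('n)" using bij by (auto simp: bij_betw_def)
lemma pos_inj: "pos x = pos y \<longleftrightarrow> x = y" using bij by (auto simp: bij_betw_def inj_on_def)
lemma enum_pos: "enum (pos x) = x" using bij by (simp add: enum_def bij_betw_def inv_into_f_f)
lemma pos_enum: "k < CARD('n) \<Longrightarrow> pos (enum k) = k"
  using bij unfolding enum_def bij_betw_def by (simp add: f_inv_into_f)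
lemma pos_z0: "pos z0 = 0" by (simp add: pos_enum)
lemma pos_eq_iff: "k < CARD('n) \<Longrightarrow> pos l = k \<longleftrightarrow> l = enum k"
  using pos_enum enum_pos by metis

lemma sum_pos: "k < CARD('n) \<Longrightarrow> (\<Sum>l\<in>UNIV. (of_bool (pos l = k) :: 'k::field)) = 1"
proof -
  assume k: "k < CARD('n)"
  have "(\<Sum>l\<in>UNIV. (of_bool (pos l = k) :: 'k)) = (\<Sum>l\<in>UNIV. if l = enum k then 1 else 0)"
    by (rule sum.cong) (auto simp: pos_eq_iff[OF k])
  then show ?thesis by simp
qed

definition W0 :: "('n,'k::field) tensor" where
  "W0 i j l =
    (if pos i = 0 then (if pos j < CARD('n) - 1 then of_bool (pos l = Suc (pos j)) else of_bool (l = j))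
     else if pos j = 0 then (if pos i < CARD('n) - 1 then of_bool (pos l = Suc (pos i)) else of_bool (l = i))
     else if i = j then of_bool (l = i) + of_bool (pos l = 0) else of_bool (pos l = 0))"

lemma W0_sym: "W0 i j l = W0 j i l"
  by (auto simp: W0_def pos_inj[symmetric])

lemma tau_W0: "tau (W0 :: ('n,'k::field) tensor) = (\<chi> i. 1)"
proof -
  have "(\<Sum>a\<in>UNIV. (W0 i a a :: 'k)) = 1" for i
  proof (cases "pos i = 0")
    case True
    have "(\<Sum>a\<in>UNIV. (W0 i a a :: 'k)) = (\<Sum>a\<in>UNIV. if a = enum (CARD('n) - 1) then 1 else 0)"
    proof (rule sum.cong[OF refl])
      fix a
      have "pos a < CARD('n)" by (rule pos_lt)
      then show "(W0 i a a :: 'k) = (if a = enum (CARD('n) - 1) then 1 else 0)"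
        using True pos_eq_iff[of "CARD('n) - 1" a] by (auto simp: W0_def)
    qed
    then show ?thesis by simp
  next
    case False
    have "(\<Sum>a\<in>UNIV. (W0 i a a :: 'k)) = (\<Sum>a\<in>UNIV. if a = i then 1 else 0)"
    proof (rule sum.cong[OF refl])
      fix a
      show "(W0 i a a :: 'k) = (if a = i then 1 else 0)"
        using False by (auto simp: W0_def)
    qed
    then show ?thesis by simp
  qed
  then show ?thesis by (simp add: tau_def vec_eq_iff)
qed

lemma sum_ob: "(\<Sum>l\<in>(UNIV::'n set). (of_bool (l = j) :: 'k::field)) = 1"
proof -
  have "(\<Sum>l\<in>(UNIV::'n set). (of_bool (l = j) :: 'k)) = (\<Sum>l\<in>UNIV. if l = j then 1 else 0)"
    by (rule sum.cong) auto
  then show ?thesis by simp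
qed

lemma rowsum: "(\<Sum>l\<in>UNIV. (W0 i j l :: 'k::field)) = 1 + of_bool (i = j \<and> pos i \<noteq> 0)"
proof -
  have Nm: "Suc k < CARD('n)" if "k < CARD('n) - 1" for k using that by simp
  consider "pos i = 0" | "pos i \<noteq> 0" "pos j = 0" | "pos i \<noteq> 0" "pos j \<noteq> 0" "i = j"
    | "pos i \<noteq> 0" "pos j \<noteq> 0" "i \<noteq> j" by blast
  then show ?thesis
  proof cases
    case 1
    show ?thesis
    proof (cases "pos j < CARD('n) - 1")
      case True
      then have "(\<Sum>l\<in>UNIV. (W0 i j l :: 'k)) = (\<Sum>l\<in>UNIV. of_bool (pos l = Suc (pos j)))"
        using 1 by (simp add: W0_def)
      then show ?thesis using 1 sum_pos[OF Nm[OF True]] by auto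
    next
      case False
      then have "(\<Sum>l\<in>UNIV. (W0 i j l :: 'k)) = (\<Sum>l\<in>UNIV. of_bool (l = j))"
        using 1 by (simp add: W0_def)
      then show ?thesis using 1 sum_ob[of j] by auto
    qed
  next
    case 2
    show ?thesis
    proof (cases "pos i < CARD('n) - 1")
      case True
      then have "(\<Sum>l\<in>UNIV. (W0 i j l :: 'k)) = (\<Sum>l\<in>UNIV. of_bool (pos l = Suc (pos i)))"
        using 2 by (simp add: W0_def)
      then show ?thesis using 2 sum_pos[OF Nm[OF True]] by auto
    next
      case False
      then have "(\<Sum>l\<in>UNIV. (W0 i j l :: 'k)) = (\<Sum>l\<in>UNIV. of_bool (l = i))"
        using 2 by (simp add: W0_def)
      then show ?thesis using 2 sum_ob[of i] by auto
    qed
  next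
    case 3
    then have "(\<Sum>l\<in>UNIV. (W0 i j l :: 'k)) = (\<Sum>l\<in>UNIV. of_bool (l = i) + of_bool (pos l = 0))"
      by (simp add: W0_def)
    also have "\<dots> = 2" using sum_ob[of i] sum_pos[of 0] by (simp add: sum.distrib)
    finally show ?thesis using 3 by simp
  next
    case 4
    then have "(\<Sum>l\<in>UNIV. (W0 i j l :: 'k)) = (\<Sum>l\<in>UNIV. of_bool (pos l = 0))"
      by (simp add: W0_def)
    then show ?thesis using 4 sum_pos[of 0] by simp
  qed
qed

lemma Bm_W0: "Bm (W0 :: ('n,'k::field) tensor) $ i $ j = 1 + of_bool (i = j \<and> pos i \<noteq> 0)"
  by (simp add: Bm_def tau_W0 rowsum)

lemma Bm_W0_ker:
  assumes "Bm (W0 :: ('n,'k::field) tensor) *v x = 0"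
  shows "x = 0"
proof -
  define S where "S = (\<Sum>j\<in>UNIV. x $ j)"
  have row: "(Bm (W0 :: ('n,'k) tensor) *v x) $ i = S + of_bool (pos i \<noteq> 0) * x $ i" for i
  proof -
    have "(Bm (W0 :: ('n,'k) tensor) *v x) $ i = (\<Sum>j\<in>UNIV. x $ j + of_bool (i = j \<and> pos i \<noteq> 0) * x $ j)"
      by (simp add: matrix_vector_mult_def Bm_W0 algebra_simps)
    also have "\<dots> = S + (\<Sum>j\<in>UNIV. if j = i then of_bool (pos i \<noteq> 0) * x $ j else 0)"
      unfolding S_def sum.distrib by (intro arg_cong2[where f="(+)"] refl sum.cong) auto
    finally show ?thesis by simp
  qed
  have S0: "S = 0" using row[of z0] assms pos_z0 by simp
  have xi: "x $ i = 0" if "i \<noteq> z0" for i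
  proof -
    have "pos i \<noteq> 0" using that pos_z0 pos_inj by metis
    then show ?thesis using row[of i] assms S0 by simp
  qed
  have "S = (\<Sum>j\<in>UNIV. if j = z0 then x $ j else 0)"
    unfolding S_def by (rule sum.cong) (auto simp: xi)
  then have "x $ z0 = 0" using S0 by simp
  then show ?thesis using xi unfolding vec_eq_iff by (metis zero_index)
qed

lemma det_Bm_W0: "det (Bm (W0 :: ('n,'k::field) tensor)) \<noteq> 0"
proof -
  let ?B = "Bm (W0 :: ('n,'k) tensor)"
  have "inj (\<lambda>x. ?B *v x)"
  proof (rule injI)
    fix x y assume "?B *v x = ?B *v y"
    then have "?B *v (x - y) = 0" by (simp add: matrix_vector_mult_diff_distrib)
    then show "x = y" using Bm_W0_ker by force
  qed
  then show ?thesis using det_nz_iff_inj_gen[of "\<lambda>x. ?B *v x"] by simp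
qed

lemma u_W0: "Bm (W0 :: ('n,'k::field) tensor) *v axis z0 1 = tau W0"
proof -
  have "(Bm (W0 :: ('n,'k) tensor) *v axis z0 1) $ i = 1" for i
  proof -
    have "(Bm (W0 :: ('n,'k) tensor) *v axis z0 1) $ i = (\<Sum>j\<in>UNIV. if j = z0 then Bm (W0 :: ('n,'k) tensor) $ i $ j else 0)"
      apply (simp only: matrix_vector_mult_def vec_lambda_beta)
      apply (rule sum.cong)
       apply (auto simp: axis_def)
      done
    also have "\<dots> = 1" using pos_z0 by (simp add: Bm_W0)
    finally show ?thesis .
  qed
  then show ?thesis by (simp add: vec_eq_iff tau_W0)
qed

lemma chain_W0:
  "s < CARD('n) \<Longrightarrow> chain (W0 :: ('n,'k::field) tensor) s = det (Bm (W0 :: ('n,'k) tensor)) ^ Suc s *s axis (enum s) 1"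
proof (induction s)
  case 0 then show ?case by (simp add: v1_eq'[OF u_W0])
next
  case (Suc s)
  let ?d = "det (Bm (W0 :: ('n,'k) tensor))"
  have s: "s < CARD('n) - 1" "Suc s < CARD('n)" using Suc.prems by auto
  have "chain (W0 :: ('n,'k) tensor) (Suc s) $ l = (?d ^ Suc (Suc s) *s axis (enum (Suc s)) 1) $ l" for l
  proof -
    have "chain (W0 :: ('n,'k) tensor) (Suc s) $ l = ?d * ?d ^ Suc s * W0 z0 (enum s) l"
      using Suc.IH s by (simp add: v1_eq'[OF u_W0] Lm_axis)
    also have "W0 z0 (enum s) l = (if l = enum (Suc s) then 1 else 0)"
      using s pos_z0 pos_enum[of s] pos_eq_iff[OF s(2), of l] by (simp add: W0_def)
    finally show ?thesis by (simp add: axis_def)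
  qed
  then show ?case by (simp add: vec_eq_iff)
qed

lemma fF_W0: "fF pos (W0 :: ('n,'k::field) tensor) \<noteq> 0"
proof -
  let ?d = "det (Bm (W0 :: ('n,'k) tensor))"
  have C: "Cm pos (W0 :: ('n,'k) tensor) $ l $ j = (if l = j then ?d ^ Suc (pos j) else 0)" for l j
  proof -
    have ch: "chain (W0::('n,'k) tensor) (pos j) = ?d ^ Suc (pos j) *s axis (enum (pos j)) 1"
      by (rule chain_W0[OF pos_lt[of j]])
    show ?thesis by (simp add: Cm_def ch enum_pos axis_def)
  qed
  have "det (Cm pos (W0 :: ('n,'k) tensor)) = (\<Prod>j\<in>UNIV. ?d ^ Suc (pos j))"
    by (subst det_diagonal) (simp_all add: C)
  moreover have dB: "?d \<noteq> 0" by (rule det_Bm_W0)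
  ultimately show ?thesis by (simp add: fF_def)
qed

lemma W0_symC: "(W0 :: ('n,'k::field) tensor) \<in> symC"
  by (simp add: symC_def W0_sym)

end



lemma act_scale: "act g (\<lambda>i j l. c * t i j l) = (\<lambda>i j l. c * act g t i j l)"
  by (simp add: act_def Let_def sum_distrib_left mult_ac)

lemma stab_scale:
  assumes c: "(c::'k::field) \<noteq> 0"
  shows "proj_stabilizer (\<lambda>i j l. c * t i j l) = proj_stabilizer (t :: ('n::finite,'k) tensor)"
proof -
  have "(act g t = (\<lambda>i j l. c' * t i j l)) \<longleftrightarrow>
        (act g (\<lambda>i j l. c * t i j l) = (\<lambda>i j l. c' * (c * t i j l)))" for g c'
  proof -
    have "(\<forall>i j l. act g t i j l = c' * t i j l) \<longleftrightarrow> (\<forall>i j l. c * act g t i j l = c' * (c * t i j l))"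
      using c by (auto simp: algebra_simps)
    then show ?thesis by (simp add: act_scale fun_eq_iff)
  qed
  then show ?thesis by (simp add: proj_stabilizer_def)
qed

theorem theorem6:
  assumes "algebraically_closed TYPE('k::field)"
    and "(2::'k) \<noteq> 0"
  shows "\<exists>W :: ('n::finite, 'k) tensor set.
           proj_open W \<and> proj_dense W \<and>
           (\<forall>t\<in>W. proj_stabilizer t = (center_GL :: ('n, 'k) mat set))"
proof -
  obtain pos :: "'n \<Rightarrow> nat" where bij: "bij_betw pos UNIV {..<CARD('n)}"
    using ex_bij_betw_finite_nat[of "UNIV :: 'n set"] by (auto simp: atLeast0LessThan)
  interpret wit pos by (unfold_locales) (rule bij)
  define S :: "(('n,'k) tensor \<Rightarrow> 'k) set" where
    "S = {(\<lambda>t. fF pos (\<lambda>i j l. c * t i j l)) | c. c \<noteq> 0}"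
  define W where "W = {t \<in> symC - {(\<lambda>i j l. 0)}. \<exists>f\<in>S. f t \<noteq> 0}"
  have polyS: "\<forall>f\<in>S. poly_fun f"
    unfolding S_def using poly_fun_scale[OF poly_fun_fF] by blast
  have inW: "t \<in> W \<longleftrightarrow> t \<in> symC \<and> t \<noteq> (\<lambda>i j l. 0) \<and> (\<exists>c. c \<noteq> 0 \<and> fF pos (\<lambda>i j l. c * t i j l) \<noteq> 0)" for t
    unfolding W_def S_def by auto
  have cone: "proj_cone W"
    unfolding proj_cone_def
  proof (intro conjI ballI allI impI)
    show "W \<subseteq> symC - {(\<lambda>i j l. 0)}" unfolding W_def by auto
  next
    fix t and c' :: 'k assume t: "t \<in> W" and c': "c' \<noteq> 0"
    from t obtain c where tS: "t \<in> symC" and t0: "t \<noteq> (\<lambda>i j l. 0)" and c: "c \<noteq> 0"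
      and f: "fF pos (\<lambda>i j l. c * t i j l) \<noteq> 0" by (auto simp: inW)
    have "(\<lambda>i j l. c' * t i j l) \<in> symC" using tS by (simp add: symC_def)
    moreover have "(\<lambda>i j l. c' * t i j l) \<noteq> (\<lambda>i j l. 0)"
    proof
      assume "(\<lambda>i j l. c' * t i j l) = (\<lambda>i j l. 0)"
      then have "t = (\<lambda>i j l. 0)" using c' by (auto simp: fun_eq_iff)
      with t0 show False ..
    qed
    moreover have "fF pos (\<lambda>i j l. (c / c') * (c' * t i j l)) \<noteq> 0"
      using f c' by simp
    moreover have "c / c' \<noteq> 0" using c c' by simp
    ultimately show "(\<lambda>i j l. c' * t i j l) \<in> W" unfolding inW by blast
  qed
  have openW: "proj_open W"
    unfolding proj_open_def using cone polyS W_def by blast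
  have denseW: "proj_dense W"
    unfolding proj_dense_def
  proof (intro allI impI)
    fix U :: "('n,'k) tensor set" assume "proj_open U \<and> U \<noteq> {}"
    then obtain S' where S': "\<forall>f\<in>S'. poly_fun f" and U: "U = {t \<in> symC - {(\<lambda>i j l. 0)}. \<exists>f\<in>S'. f t \<noteq> 0}"
      and Une: "U \<noteq> {}" unfolding proj_open_def by blast
    then obtain t1 f1 where t1S: "t1 \<in> symC" and t10: "t1 \<noteq> (\<lambda>i j l. 0)" and f1S: "f1 \<in> S'"
      and f1: "f1 t1 \<noteq> 0" by blast
    from t10 obtain i0 j0 l0 where c0: "t1 i0 j0 l0 \<noteq> 0" by (auto simp: fun_eq_iff)
    define B where "B = (\<lambda>i j l. W0 i j l - t1 i j l)"
    define T where "T s = (\<lambda>i j l. t1 i j l + s * B i j l)" for s :: 'k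
    have T0: "T 0 = t1" by (simp add: T_def)
    have T1: "T 1 = W0" by (simp add: T_def B_def)
    obtain p1 where p1: "\<forall>s. f1 (T s) = poly p1 s"
      using poly_fun_line[of f1 t1 B] S' f1S unfolding T_def by blast
    obtain p2 where p2: "\<forall>s. fF pos (T s) = poly p2 s"
      using poly_fun_line[OF poly_fun_fF, of pos t1 B] unfolding T_def by blast
    obtain p3 where p3: "\<forall>s. T s i0 j0 l0 = poly p3 s"
      using poly_fun_line[OF poly_fun.coord[of i0 j0 l0], of t1 B] unfolding T_def by blast
    have "p1 \<noteq> 0" using p1 f1 T0 by (metis poly_0)
    moreover have "p2 \<noteq> 0" using p2 fF_W0 T1 by (metis poly_0)
    moreover have "p3 \<noteq> 0" using p3 c0 T0 by (metis poly_0)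
    ultimately have "p1 * p2 * p3 \<noteq> 0" by simp
    then have "finite {x. poly (p1 * p2 * p3) x = 0}" by (rule poly_roots_finite)
    then obtain s where s: "s \<notin> {x. poly (p1 * p2 * p3) x = 0}"
      using ex_new_if_finite[OF alg_closed_infinite[OF assms(1)]] by blast
    then have ne: "f1 (T s) \<noteq> 0" "fF pos (T s) \<noteq> 0" "T s i0 j0 l0 \<noteq> 0"
      using p1 p2 p3 by auto
    have W0S: "(W0::('n,'k) tensor) \<in> symC" by (rule W0_symC)
    have TS: "T s \<in> symC" using t1S W0S
      by (simp add: symC_def T_def B_def)
    have Tn: "T s \<noteq> (\<lambda>i j l. 0)" using ne(3) by auto
    have "T s \<in> U" unfolding U using TS Tn ne(1) f1S by blast
    moreover have "T s \<in> W" unfolding inW using TS Tn ne(2)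
      by (intro conjI exI[of _ 1]) simp_all
    ultimately show "W \<inter> U \<noteq> {}" by blast
  qed
  have stab: "\<forall>t\<in>W. proj_stabilizer t = center_GL"
  proof
    fix t assume "t \<in> W"
    then obtain c where c: "c \<noteq> 0" and f: "fF pos (\<lambda>i j l. c * t i j l) \<noteq> 0" by (auto simp: inW)
    have "proj_stabilizer t = proj_stabilizer (\<lambda>i j l. c * t i j l)" by (rule stab_scale[OF c, symmetric])
    also have "\<dots> = center_GL" by (rule stab_center[OF f])
    finally show "proj_stabilizer t = center_GL" .
  qed
  show ?thesis using openW denseW stab by blast
qed

end
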